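(* Let $a,b\in C\ell_{1,2}$. Then (1) $L(a)L(a^+)L(a)=L(a)$, $L(a^+)L(a)L(a^+)=L(a^+)$, $L(a)L(a^+)=(L(a)L(a^+))^T$, $L(a^+)L(a)=(L(a^+)L(a))^T$; (2) $R(a)R(a^+)R(a)=R(a)$, $R(a^+)R(a)R(a^+)=R(a^+)$, $R(a)R(a^+)=(R(a)R(a^+))^T$, $R(a^+)R(a)=(R(a^+)R(a))^T$; (3) $(L(a)R(b))^+=L(a^+)R(b^+)$, where the left side is the Moore–Penrose inverse of the real matrix $L(a)R(b)$.
   Context: $C\ell_{1,2}$ is the real Clifford algebra generated by $i_1,i_2,i_3$ with $i_1^2=1$, $i_2^2=i_3^2=-1$ and $i_ti_m=-i_mi_t$ for $t\neq m$, with real basis $e_0=1$, $e_1=i_1$, $e_2=i_2$, $e_3=i_1i_2$, $e_4=i_3$, $e_5=i_1i_3$, $e_6=i_2i_3$, $e_7=i_1i_2i_3$. For $x=\sum_{t=0}^7x_te_t$ write $\overrightarrow{x}=(x_0,\dots,x_7)^T$. $L(a)$, $R(a)$ are the real $8\times8$ matrices with $\overrightarrow{ax}=L(a)\overrightarrow{x}$, $\overrightarrow{xa}=R(a)\overrightarrow{x}$ for all $x$. The prime of $a=\sum a_te_t$ is $a'=a_0+a_1e_1-a_2e_2+a_3e_3-a_4e_4+a_5e_5-a_6e_6-a_7e_7$. For every $a$ there is a unique $x\in C\ell_{1,2}$ with $axa=a$, $xax=x$, $(ax)'=ax$, $(xa)'=xa$, denoted $a^+$ (the Moore–Penrose inverse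 of $a$). The Moore–Penrose inverse $A^+$ of a real matrix $A$ is the unique real matrix $X$ with $AXA=A$, $XAX=X$, $(AX)^T=AX$, $(XA)^T=XA$. *)

theory Defs
  imports "HOL-Analysis.Analysis"
begin

text \<open>Elements of Cl(1,2) are represented by their coordinate vectors in real^8 w.r.t. the
basis e_0,...,e_7.  Basis index t (0..7) is read as a bitmask: bit 0 = i_1, bit 1 = i_2,
bit 2 = i_3, the generators taken in increasing order.  This matches
e_0=1, e_1=i1, e_2=i2, e_3=i1 i2, e_4=i3, e_5=i1 i3, e_6=i2 i3, e_7=i1 i2 i3.\<close>

type_synonym cl12 = "real ^ 8"

definition gens :: "nat \<Rightarrow> nat set" where
  "gens s = {g. g < 3 \<and> bit s g}"

definition gen_sq :: "nat \<Rightarrow> real" where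
  "gen_sq g = (if g = 0 then 1 else -1)"

text \<open>e_s e_t = blade_sign s t * e_(s xor t): anticommute generators of t past larger
generators of s, then square coincident generators.\<close>
definition blade_sign :: "nat \<Rightarrow> nat \<Rightarrow> real" where
  "blade_sign s t =
     (-1) ^ card {(i, j). i \<in> gens s \<and> j \<in> gens t \<and> j < i}
     * (\<Prod>g\<in>gens s \<inter> gens t. gen_sq g)"

definition clmul :: "cl12 \<Rightarrow> cl12 \<Rightarrow> cl12" where
  "clmul a b = (\<chi> k. \<Sum>s<8. \<Sum>t<8.
      if (of_nat (Bit_Operations.xor s t) :: 8) = k
      then blade_sign s t * a $ (of_nat s) * b $ (of_nat t) else 0)"

definition Lmat :: "cl12 \<Rightarrow> real ^ 8 ^ 8" where
  "Lmat a = matrix (\<lambda>x. clmul a x)"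

definition Rmat :: "cl12 \<Rightarrow> real ^ 8 ^ 8" where
  "Rmat a = matrix (\<lambda>x. clmul x a)"

definition cl_prime :: "cl12 \<Rightarrow> cl12" where
  "cl_prime a = (\<chi> k. (if k \<in> {2, 4, 6, 7} then -1 else 1) * a $ k)"

definition cl_mp :: "cl12 \<Rightarrow> cl12" where
  "cl_mp a = (THE x. clmul (clmul a x) a = a \<and> clmul (clmul x a) x = x
      \<and> cl_prime (clmul a x) = clmul a x \<and> cl_prime (clmul x a) = clmul x a)"

definition mat_mp :: "real ^ 'n ^ 'm \<Rightarrow> real ^ 'm ^ 'n" where
  "mat_mp A = (THE X. A ** X ** A = A \<and> X ** A ** X = X
      \<and> transpose (A ** X) = A ** X \<and> transpose (X ** A) = X ** A)"

end

theory Submission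
  imports Defs
begin
lemma UNIV8: "(UNIV::8 set) = {0,1,2,3,4,5,6,7}"
proof -
  have "card {0::8,1,2,3,4,5,6,7} = CARD(8)" by simp
  from card_subset_eq[OF finite_class.finite_UNIV subset_UNIV this] show ?thesis by simp
qed
lemma set3: "{g::nat. g < 3 \<and> P g} = (if P 0 then {0} else {}) \<union> (if P 1 then {1} else {}) \<union> (if P 2 then {2} else {})"
proof (rule set_eqI)
  fix x show "x \<in> {g::nat. g < 3 \<and> P g} \<longleftrightarrow> x \<in> (if P 0 then {0} else {}) \<union> (if P 1 then {1} else {}) \<union> (if P 2 then {2} else {})"
    by (cases "x = 0"; cases "x = 1"; cases "x = 2"; auto)
qed
lemma gens_vals: "gens 0 = {}" "gens 1 = {0}" "gens 2 = {1}" "gens 3 = {0,1}"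
   "gens 4 = {2}" "gens 5 = {0,2}" "gens 6 = {1,2}" "gens 7 = {0,1,2}"
  by (auto simp: gens_def set3 bit_nat_def) 
lemma pairs_eq: "{(i, j). i \<in> A \<and> j \<in> B \<and> (j::nat) < i} = Set.filter (\<lambda>p. snd p < fst p) (A \<times> B)"
  by auto
lemma filt_ins: "Set.filter P (insert x A) = (if P x then insert x (Set.filter P A) else Set.filter P A)"
  by auto
lemma filt_empty: "Set.filter P {} = {}" by auto
lemma filt_un: "Set.filter P (A \<union> B) = Set.filter P A \<union> Set.filter P B" by auto
lemma bs_vals:
  "blade_sign 0 0 = 1"
  "blade_sign 0 1 = 1"
  "blade_sign 0 2 = 1"
  "blade_sign 0 3 = 1"
  "blade_sign 0 4 = 1"
  "blade_sign 0 5 = 1"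
  "blade_sign 0 6 = 1"
  "blade_sign 0 7 = 1"
  "blade_sign 1 0 = 1"
  "blade_sign 1 1 = 1"
  "blade_sign 1 2 = 1"
  "blade_sign 1 3 = 1"
  "blade_sign 1 4 = 1"
  "blade_sign 1 5 = 1"
  "blade_sign 1 6 = 1"
  "blade_sign 1 7 = 1"
  "blade_sign 2 0 = 1"
  "blade_sign 2 1 = -1"
  "blade_sign 2 2 = -1"
  "blade_sign 2 3 = 1"
  "blade_sign 2 4 = 1"
  "blade_sign 2 5 = -1"
  "blade_sign 2 6 = -1"
  "blade_sign 2 7 = 1"
  "blade_sign 3 0 = 1"
  "blade_sign 3 1 = -1"
  "blade_sign 3 2 = -1"
  "blade_sign 3 3 = 1"
  "blade_sign 3 4 = 1"
  "blade_sign 3 5 = -1"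
  "blade_sign 3 6 = -1"
  "blade_sign 3 7 = 1"
  "blade_sign 4 0 = 1"
  "blade_sign 4 1 = -1"
  "blade_sign 4 2 = -1"
  "blade_sign 4 3 = 1"
  "blade_sign 4 4 = -1"
  "blade_sign 4 5 = 1"
  "blade_sign 4 6 = 1"
  "blade_sign 4 7 = -1"
  "blade_sign 5 0 = 1"
  "blade_sign 5 1 = -1"
  "blade_sign 5 2 = -1"
  "blade_sign 5 3 = 1"
  "blade_sign 5 4 = -1"
  "blade_sign 5 5 = 1"
  "blade_sign 5 6 = 1"
  "blade_sign 5 7 = -1"
  "blade_sign 6 0 = 1"
  "blade_sign 6 1 = 1"
  "blade_sign 6 2 = 1"
  "blade_sign 6 3 = 1"
  "blade_sign 6 4 = -1"
  "blade_sign 6 5 = -1"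
  "blade_sign 6 6 = -1"
  "blade_sign 6 7 = -1"
  "blade_sign 7 0 = 1"
  "blade_sign 7 1 = 1"
  "blade_sign 7 2 = 1"
  "blade_sign 7 3 = 1"
  "blade_sign 7 4 = -1"
  "blade_sign 7 5 = -1"
  "blade_sign 7 6 = -1"
  "blade_sign 7 7 = -1"
  unfolding blade_sign_def gens_vals pairs_eq
  apply (simp_all only: insert_Times_insert Sigma_empty1 Sigma_empty2 filt_ins filt_empty filt_un Un_insert_left Un_empty_left Un_empty_right)
  by (simp_all add: gen_sq_def)
lemma lt8: "{..<8::nat} = {0,1,2,3,4,5,6,7}" by auto

lemma clmul_comp:
  "clmul a b $ 0 = a $ 0 * b $ 0 + a $ 1 * b $ 1 - a $ 2 * b $ 2 + a $ 3 * b $ 3 - a $ 4 * b $ 4 + a $ 5 * b $ 5 - a $ 6 * b $ 6 - a $ 7 * b $ 7"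
  "clmul a b $ 1 = a $ 0 * b $ 1 + a $ 1 * b $ 0 + a $ 2 * b $ 3 - a $ 3 * b $ 2 + a $ 4 * b $ 5 - a $ 5 * b $ 4 - a $ 6 * b $ 7 - a $ 7 * b $ 6"
  "clmul a b $ 2 = a $ 0 * b $ 2 + a $ 1 * b $ 3 + a $ 2 * b $ 0 - a $ 3 * b $ 1 + a $ 4 * b $ 6 - a $ 5 * b $ 7 - a $ 6 * b $ 4 - a $ 7 * b $ 5"
  "clmul a b $ 3 = a $ 0 * b $ 3 + a $ 1 * b $ 2 - a $ 2 * b $ 1 + a $ 3 * b $ 0 - a $ 4 * b $ 7 + a $ 5 * b $ 6 - a $ 6 * b $ 5 - a $ 7 * b $ 4"
  "clmul a b $ 4 = a $ 0 * b $ 4 + a $ 1 * b $ 5 - a $ 2 * b $ 6 + a $ 3 * b $ 7 + a $ 4 * b $ 0 - a $ 5 * b $ 1 + a $ 6 * b $ 2 + a $ 7 * b $ 3"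
  "clmul a b $ 5 = a $ 0 * b $ 5 + a $ 1 * b $ 4 + a $ 2 * b $ 7 - a $ 3 * b $ 6 - a $ 4 * b $ 1 + a $ 5 * b $ 0 + a $ 6 * b $ 3 + a $ 7 * b $ 2"
  "clmul a b $ 6 = a $ 0 * b $ 6 + a $ 1 * b $ 7 + a $ 2 * b $ 4 - a $ 3 * b $ 5 - a $ 4 * b $ 2 + a $ 5 * b $ 3 + a $ 6 * b $ 0 + a $ 7 * b $ 1"
  "clmul a b $ 7 = a $ 0 * b $ 7 + a $ 1 * b $ 6 - a $ 2 * b $ 5 + a $ 3 * b $ 4 + a $ 4 * b $ 3 - a $ 5 * b $ 2 + a $ 6 * b $ 1 + a $ 7 * b $ 0"
  unfolding clmul_def by (simp_all add: lt8 bs_vals bs_vals[simplified])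

lemma vec8_eq: "(x::real^8) = y \<longleftrightarrow> x$0=y$0 \<and> x$1=y$1 \<and> x$2=y$2 \<and> x$3=y$3 \<and> x$4=y$4 \<and> x$5=y$5 \<and> x$6=y$6 \<and> x$7=y$7"
proof -
  have "x = y \<longleftrightarrow> (\<forall>k\<in>UNIV. x$k = y$k)" by (simp add: vec_eq_iff)
  then show ?thesis unfolding UNIV8 by simp
qed

lemma clmul_assoc: "clmul (clmul a b) c = clmul a (clmul b c)"
  unfolding vec8_eq by (simp add: clmul_comp algebra_simps)
lemma clmul_add_right: "clmul a (x + y) = clmul a x + clmul a y"
  unfolding vec8_eq by (simp add: clmul_comp algebra_simps)
lemma clmul_add_left: "clmul (x + y) a = clmul x a + clmul y a"
  unfolding vec8_eq by (simp add: clmul_comp algebra_simps)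
lemma clmul_scale_right: "clmul a (c *\<^sub>R x) = c *\<^sub>R clmul a x"
  unfolding vec8_eq by (simp add: clmul_comp algebra_simps)
lemma clmul_scale_left: "clmul (c *\<^sub>R x) a = c *\<^sub>R clmul x a"
  unfolding vec8_eq by (simp add: clmul_comp algebra_simps)
lemma clmul_zero_left: "clmul 0 a = 0"
  unfolding vec8_eq by (simp add: clmul_comp)

lemma lin_L: "linear (\<lambda>x. clmul a x)"
  by (rule linearI) (simp_all add: clmul_add_right clmul_scale_right)
lemma lin_R: "linear (\<lambda>x. clmul x a)"
  by (rule linearI) (simp_all add: clmul_add_left clmul_scale_left)

lemma LL: "Lmat a ** Lmat b = Lmat (clmul a b)"
proof -
  have "Lmat a ** Lmat b = matrix ((\<lambda>x. clmul a x) \<circ> (\<lambda>x. clmul b x))"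
    unfolding Lmat_def by (rule matrix_compose[OF lin_L lin_L, symmetric])
  also have "\<dots> = Lmat (clmul a b)" unfolding Lmat_def by (simp add: o_def clmul_assoc[symmetric])
  finally show ?thesis .
qed
lemma RR: "Rmat a ** Rmat b = Rmat (clmul b a)"
proof -
  have "Rmat a ** Rmat b = matrix ((\<lambda>x. clmul x a) \<circ> (\<lambda>x. clmul x b))"
    unfolding Rmat_def by (rule matrix_compose[OF lin_R lin_R, symmetric])
  also have "\<dots> = Rmat (clmul b a)" unfolding Rmat_def by (simp add: o_def clmul_assoc)
  finally show ?thesis .
qed
lemma LR_comm: "Lmat a ** Rmat b = Rmat b ** Lmat a"
proof -
  have "Lmat a ** Rmat b = matrix ((\<lambda>x. clmul a x) \<circ> (\<lambda>x. clmul x b))"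
    unfolding Lmat_def Rmat_def by (rule matrix_compose[OF lin_R lin_L, symmetric])
  also have "\<dots> = matrix ((\<lambda>x. clmul x b) \<circ> (\<lambda>x. clmul a x))" by (simp add: o_def clmul_assoc)
  also have "\<dots> = Rmat b ** Lmat a"
    unfolding Lmat_def Rmat_def by (rule matrix_compose[OF lin_L lin_R])
  finally show ?thesis .
qed

lemma mat8_eq: "(A::real^8^8) = B \<longleftrightarrow> (\<forall>i\<in>UNIV. \<forall>j\<in>UNIV. A$i$j = B$i$j)"
  by (simp add: vec_eq_iff)

lemma prime_comp: "cl_prime a $ 0 = a $ 0" "cl_prime a $ 1 = a $ 1" "cl_prime a $ 2 = - a $ 2"
  "cl_prime a $ 3 = a $ 3" "cl_prime a $ 4 = - a $ 4" "cl_prime a $ 5 = a $ 5"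
  "cl_prime a $ 6 = - a $ 6" "cl_prime a $ 7 = - a $ 7"
  by (simp_all add: cl_prime_def)

lemma tL: "transpose (Lmat a) = Lmat (cl_prime a)"
  unfolding mat8_eq UNIV8 Lmat_def transpose_def
  by (simp add: matrix_def clmul_comp prime_comp axis_def)
lemma tR: "transpose (Rmat a) = Rmat (cl_prime a)"
  unfolding mat8_eq UNIV8 Rmat_def transpose_def
  by (simp add: matrix_def clmul_comp prime_comp axis_def)

definition one8 :: cl12 where "one8 = axis 0 1"
lemma one8_comp: "one8$0 = 1" "one8$1 = 0" "one8$2 = 0" "one8$3 = 0" "one8$4 = 0" "one8$5 = 0" "one8$6 = 0" "one8$7 = 0"
  by (simp_all add: one8_def axis_def)
lemma clmul_one_right: "clmul a one8 = a"
  unfolding vec8_eq by (simp add: clmul_comp one8_comp)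
lemma clmul_one_left: "clmul one8 a = a"
  unfolding vec8_eq by (simp add: clmul_comp one8_comp)
lemma prime_one: "cl_prime one8 = one8"
  unfolding vec8_eq prime_comp one8_comp by simp

lemma L_col: "(\<chi> i. Lmat x $ i $ 0) = x"
  by (simp add: Lmat_def matrix_def one8_def[symmetric] clmul_one_right)
lemma L_inj: "Lmat x = Lmat y \<Longrightarrow> x = y"
  by (metis L_col)
lemma mp_unique:
  fixes A :: "real^'n^'m" and X Y :: "real^'m^'n"
  assumes x1: "A ** X ** A = A" and x2: "X ** A ** X = X" and x3: "transpose (A ** X) = A ** X"
    and x4: "transpose (X ** A) = X ** A"
    and y1: "A ** Y ** A = A" and y2: "Y ** A ** Y = Y" and y3: "transpose (A ** Y) = A ** Y"
    and y4: "transpose (Y ** A) = Y ** A"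
  shows "X = Y"
proof -
  have "X = X ** A ** X" using x2 by simp
  also have "\<dots> = X ** transpose (A ** X)" by (simp add: x3 matrix_mul_assoc)
  also have "\<dots> = X ** transpose X ** transpose A" by (simp add: matrix_transpose_mul matrix_mul_assoc)
  also have "\<dots> = X ** transpose X ** transpose (A ** Y ** A)" by (simp add: y1)
  also have "\<dots> = X ** transpose (A ** X) ** transpose (A ** Y)" by (simp add: matrix_transpose_mul matrix_mul_assoc)
  also have "\<dots> = X ** (A ** X) ** (A ** Y)" by (simp add: x3 y3)
  also have "\<dots> = X ** A ** Y" by (simp add: matrix_mul_assoc x2)
  finally have hx: "X = X ** A ** Y" .
  have "Y = Y ** A ** Y" using y2 by simp
  also have "\<dots> = transpose (Y ** A) ** Y" by (simp add: y4)
  also have "\<dots> = transpose A ** transpose Y ** Y" by (simp add: matrix_transpose_mul matrix_mul_assoc)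
  also have "\<dots> = transpose (A ** X ** A) ** transpose Y ** Y" by (simp add: x1)
  also have "\<dots> = transpose (X ** A) ** transpose (Y ** A) ** Y" by (simp add: matrix_transpose_mul matrix_mul_assoc)
  also have "\<dots> = (X ** A) ** (Y ** A) ** Y" by (simp add: x4 y4)
  also have "\<dots> = X ** A ** Y"
  proof -
    have "Y ** (A ** Y) = Y" using y2 by (simp add: matrix_mul_assoc)
    then show ?thesis by (simp add: matrix_mul_assoc[symmetric])
  qed
  finally have hy: "Y = X ** A ** Y" .
  from hx hy show ?thesis by simp
qed

definition cconj :: "cl12 \<Rightarrow> cl12" where
  "cconj a = (\<chi> k. (if k = 0 \<or> k = 7 then 1 else -1) * a $ k)"
definition cen :: "real \<Rightarrow> real \<Rightarrow> cl12" where
  "cen p q = (\<chi> k. if k = 0 then p else if k = 7 then q else 0)"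
definition dd1 :: "cl12 \<Rightarrow> real" where "dd1 a = clmul a (cconj a) $ 0"
definition dd2 :: "cl12 \<Rightarrow> real" where "dd2 a = clmul a (cconj a) $ 7"
definition nrm :: "cl12 \<Rightarrow> real" where
  "nrm a = a$0^2 + a$1^2 + a$2^2 + a$3^2 + a$4^2 + a$5^2 + a$6^2 + a$7^2"

lemma cconj_comp: "cconj a $ 0 = a $ 0" "cconj a $ 1 = - a $ 1" "cconj a $ 2 = - a $ 2"
  "cconj a $ 3 = - a $ 3" "cconj a $ 4 = - a $ 4" "cconj a $ 5 = - a $ 5"
  "cconj a $ 6 = - a $ 6" "cconj a $ 7 = a $ 7"
  by (simp_all add: cconj_def)
lemma cen_comp: "cen p q $ 0 = p" "cen p q $ 1 = 0" "cen p q $ 2 = 0"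
  "cen p q $ 3 = 0" "cen p q $ 4 = 0" "cen p q $ 5 = 0"
  "cen p q $ 6 = 0" "cen p q $ 7 = q"
  by (simp_all add: cen_def)

lemmas comps = clmul_comp cconj_comp cen_comp prime_comp one8_comp

lemma I_aca: "clmul a (cconj a) = cen (dd1 a) (dd2 a)"
  unfolding vec8_eq dd1_def dd2_def by (simp add: comps algebra_simps)
lemma I_caa: "clmul (cconj a) a = cen (dd1 a) (dd2 a)"
  unfolding vec8_eq dd1_def dd2_def by (simp add: comps algebra_simps)
lemma I_cen_comm: "clmul (cen p q) x = clmul x (cen p q)"
  unfolding vec8_eq by (simp add: comps algebra_simps)
lemma I_cen_mul: "clmul (cen p q) (cen r s) = cen (p * r - q * s) (p * s + q * r)"
  unfolding vec8_eq by (simp add: comps algebra_simps)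
lemma cen_one: "cen 1 0 = one8"
  unfolding vec8_eq by (simp add: comps)
lemma cen_zero: "cen 0 0 = 0"
  unfolding vec8_eq by (simp add: comps)
lemma I1: "clmul (clmul a (cl_prime a)) a = (2 * nrm a) *\<^sub>R a - clmul (cen (dd1 a) (dd2 a)) (cl_prime (cconj a))"
  unfolding vec8_eq dd1_def dd2_def nrm_def by (simp add: comps algebra_simps power2_eq_square)
lemma I2: "clmul (clmul (cl_prime a) a) (cl_prime a) = (2 * nrm a) *\<^sub>R cl_prime a - clmul (cconj a) (cen (dd1 a) (- dd2 a))"
  unfolding vec8_eq dd1_def dd2_def nrm_def by (simp add: comps algebra_simps power2_eq_square)
lemma I3: "cl_prime (clmul a (cl_prime a)) = clmul a (cl_prime a)"
  unfolding vec8_eq by (simp add: comps algebra_simps)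
lemma I4: "cl_prime (clmul (cl_prime a) a) = clmul (cl_prime a) a"
  unfolding vec8_eq by (simp add: comps algebra_simps)
lemma prime_scale: "cl_prime (c *\<^sub>R x) = c *\<^sub>R cl_prime x"
  unfolding vec8_eq by (simp add: comps)
lemma prime_zero: "cl_prime 0 = 0"
  unfolding vec8_eq by (simp add: comps)

definition isMP :: "cl12 \<Rightarrow> cl12 \<Rightarrow> bool" where
  "isMP a x \<longleftrightarrow> clmul (clmul a x) a = a \<and> clmul (clmul x a) x = x
      \<and> cl_prime (clmul a x) = clmul a x \<and> cl_prime (clmul x a) = clmul x a"

lemma nrm_zero: assumes "nrm a = 0" shows "a = 0"
proof -
  have h: "a$0^2 = 0 \<and> a$1^2 = 0 \<and> a$2^2 = 0 \<and> a$3^2 = 0 \<and> a$4^2 = 0 \<and> a$5^2 = 0 \<and> a$6^2 = 0 \<and> a$7^2 = 0"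
    using assms unfolding nrm_def
    using zero_le_power2[of "a$0"] zero_le_power2[of "a$1"] zero_le_power2[of "a$2"] zero_le_power2[of "a$3"]
      zero_le_power2[of "a$4"] zero_le_power2[of "a$5"] zero_le_power2[of "a$6"] zero_le_power2[of "a$7"]
    by linarith
  then show ?thesis unfolding vec8_eq by simp
qed

lemma exists_MP: "\<exists>x. isMP a x"
proof (cases "dd1 a ^ 2 + dd2 a ^ 2 = 0")
  case False
  define D where "D = dd1 a ^ 2 + dd2 a ^ 2"
  have D: "D \<noteq> 0" using False D_def by simp
  define z where "z = cen (dd1 a / D) (- dd2 a / D)"
  define w where "w = clmul (cconj a) z"
  have cz: "clmul (cen (dd1 a) (dd2 a)) z = one8"
  proof -
    have "clmul (cen (dd1 a) (dd2 a)) z = cen (dd1 a * (dd1 a / D) - dd2 a * (- dd2 a / D)) (dd1 a * (- dd2 a / D) + dd2 a * (dd1 a / D))"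
      unfolding z_def by (rule I_cen_mul)
    also have "dd1 a * (dd1 a / D) - dd2 a * (- dd2 a / D) = (dd1 a ^ 2 + dd2 a ^ 2) / D"
      by (simp add: power2_eq_square add_divide_distrib)
    also have "\<dots> = 1" using D unfolding D_def by simp
    also have "dd1 a * (- dd2 a / D) + dd2 a * (dd1 a / D) = 0"
      by (simp add: field_simps)
    finally show ?thesis by (simp add: cen_one)
  qed
  have aw: "clmul a w = one8"
    unfolding w_def clmul_assoc[symmetric] I_aca by (rule cz)
  have wa: "clmul w a = one8"
  proof -
    have "clmul w a = clmul (cconj a) (clmul z a)" unfolding w_def by (simp add: clmul_assoc)
    also have "clmul z a = clmul a z" unfolding z_def by (rule I_cen_comm)
    also have "clmul (cconj a) (clmul a z) = clmul (cen (dd1 a) (dd2 a)) z"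
      by (simp add: clmul_assoc[symmetric] I_caa)
    finally show ?thesis using cz by simp
  qed
  have "isMP a w" unfolding isMP_def aw wa by (simp add: clmul_one_left clmul_one_right prime_one)
  then show ?thesis by blast
next
  case True
  have d1: "dd1 a = 0" and d2: "dd2 a = 0" using True by (simp_all add: sum_power2_eq_zero_iff)
  define s where "s = 1 / (2 * nrm a)"
  define x where "x = s *\<^sub>R cl_prime a"
  have c0: "cen (dd1 a) (dd2 a) = 0" "cen (dd1 a) (- dd2 a) = 0" using d1 d2 by (simp_all add: cen_zero)
  have zr: "clmul y 0 = 0" for y unfolding vec8_eq by (simp add: clmul_comp)
  have e1: "clmul (clmul a x) a = (s * (2 * nrm a)) *\<^sub>R a"
    unfolding x_def by (simp add: clmul_scale_right clmul_scale_left I1 c0 clmul_zero_left)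
  have e2: "clmul (clmul x a) x = (s * s * (2 * nrm a)) *\<^sub>R cl_prime a"
    unfolding x_def by (simp add: clmul_scale_right clmul_scale_left I2 c0 zr)
  have "isMP a x"
  proof (cases "nrm a = 0")
    case True
    then have "a = 0" by (rule nrm_zero)
    then show ?thesis unfolding isMP_def x_def
      by (simp add: clmul_zero_left zr prime_scale prime_zero)
  next
    case False
    have "s * (2 * nrm a) = 1" "s * s * (2 * nrm a) = s" unfolding s_def using False by simp_all
    then show ?thesis unfolding isMP_def e1 e2
      by (simp add: x_def clmul_scale_right clmul_scale_left prime_scale I3 I4)
  qed
  then show ?thesis by blast
qed

lemma MP_L: assumes "isMP a x"
  shows "Lmat a ** Lmat x ** Lmat a = Lmat a" "Lmat x ** Lmat a ** Lmat x = Lmat x"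
    "transpose (Lmat a ** Lmat x) = Lmat a ** Lmat x" "transpose (Lmat x ** Lmat a) = Lmat x ** Lmat a"
  using assms unfolding isMP_def by (simp_all add: LL tL)

lemma MP_R: assumes "isMP a x"
  shows "Rmat a ** Rmat x ** Rmat a = Rmat a" "Rmat x ** Rmat a ** Rmat x = Rmat x"
    "transpose (Rmat a ** Rmat x) = Rmat a ** Rmat x" "transpose (Rmat x ** Rmat a) = Rmat x ** Rmat a"
proof -
  have h: "clmul a (clmul x a) = a" "clmul x (clmul a x) = x" using assms unfolding isMP_def by (simp_all add: clmul_assoc)
  show "Rmat a ** Rmat x ** Rmat a = Rmat a" "Rmat x ** Rmat a ** Rmat x = Rmat x"
    by (simp_all add: RR h)
  show "transpose (Rmat a ** Rmat x) = Rmat a ** Rmat x" "transpose (Rmat x ** Rmat a) = Rmat x ** Rmat a"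
    using assms unfolding isMP_def by (simp_all add: RR tR)
qed

lemma MP_unique_cl: assumes "isMP a x" "isMP a y" shows "x = y"
proof -
  have "Lmat x = Lmat y"
    using mp_unique[OF MP_L[OF assms(1)] MP_L[OF assms(2)]] .
  then show ?thesis by (rule L_inj)
qed

lemma cl_mp_isMP: "isMP a (cl_mp a)"
proof -
  obtain x where x: "isMP a x" using exists_MP by blast
  have "isMP a (THE x. isMP a x)"
    by (rule theI[of "isMP a", OF x]) (rule MP_unique_cl[OF _ x])
  then show ?thesis unfolding cl_mp_def isMP_def[symmetric] .
qed
lemma LRLR: "(Lmat p ** Rmat q) ** (Lmat r ** Rmat s) = Lmat (clmul p r) ** Rmat (clmul s q)"
proof -
  have "(Lmat p ** Rmat q) ** (Lmat r ** Rmat s) = Lmat p ** (Rmat q ** Lmat r) ** Rmat s"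
    by (simp add: matrix_mul_assoc)
  also have "\<dots> = Lmat p ** (Lmat r ** Rmat q) ** Rmat s" by (simp add: LR_comm)
  also have "\<dots> = (Lmat p ** Lmat r) ** (Rmat q ** Rmat s)" by (simp add: matrix_mul_assoc)
  finally show ?thesis by (simp add: LL RR)
qed

lemma tLR: "transpose (Lmat u ** Rmat v) = Lmat (cl_prime u) ** Rmat (cl_prime v)"
  by (simp add: matrix_transpose_mul tL tR LR_comm)

lemma mat_mp_LR: "mat_mp (Lmat a ** Rmat b) = Lmat (cl_mp a) ** Rmat (cl_mp b)"
proof -
  let ?A = "Lmat a ** Rmat b"
  let ?X = "Lmat (cl_mp a) ** Rmat (cl_mp b)"
  have ha: "isMP a (cl_mp a)" and hb: "isMP b (cl_mp b)" by (rule cl_mp_isMP)+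
  have hb': "clmul b (clmul (cl_mp b) b) = b" "clmul (cl_mp b) (clmul b (cl_mp b)) = cl_mp b"
    using hb unfolding isMP_def by (simp_all add: clmul_assoc)
  have P: "?A ** ?X ** ?A = ?A \<and> ?X ** ?A ** ?X = ?X \<and> transpose (?A ** ?X) = ?A ** ?X \<and> transpose (?X ** ?A) = ?X ** ?A"
    using ha hb hb' unfolding isMP_def by (simp add: LRLR tLR)
  have "mat_mp ?A = (THE X. ?A ** X ** ?A = ?A \<and> X ** ?A ** X = X \<and> transpose (?A ** X) = ?A ** X \<and> transpose (X ** ?A) = X ** ?A)"
    unfolding mat_mp_def ..
  also have "\<dots> = ?X"
    apply (rule the_equality)
     apply (rule P)
    apply (elim conjE)
    apply (rule mp_unique)
    using P by auto
  finally show ?thesis .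
qed

theorem proposition4p2:
  fixes a b :: cl12
  shows "Lmat a ** Lmat (cl_mp a) ** Lmat a = Lmat a
       \<and> Lmat (cl_mp a) ** Lmat a ** Lmat (cl_mp a) = Lmat (cl_mp a)
       \<and> Lmat a ** Lmat (cl_mp a) = transpose (Lmat a ** Lmat (cl_mp a))
       \<and> Lmat (cl_mp a) ** Lmat a = transpose (Lmat (cl_mp a) ** Lmat a)
       \<and> Rmat a ** Rmat (cl_mp a) ** Rmat a = Rmat a
       \<and> Rmat (cl_mp a) ** Rmat a ** Rmat (cl_mp a) = Rmat (cl_mp a)
       \<and> Rmat a ** Rmat (cl_mp a) = transpose (Rmat a ** Rmat (cl_mp a))
       \<and> Rmat (cl_mp a) ** Rmat a = transpose (Rmat (cl_mp a) ** Rmat a)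
       \<and> mat_mp (Lmat a ** Rmat b) = Lmat (cl_mp a) ** Rmat (cl_mp b)"
  using MP_L[OF cl_mp_isMP[of a]] MP_R[OF cl_mp_isMP[of a]] mat_mp_LR[of a b] by simp
end
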